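(* Let $\mathcal{I}\subseteq\mathcal{M}_m$ be decreasing and $f,g\in\mathcal{I}$ with $\deg f=\deg g=s\ge2$, $\operatorname{ind}(f)=\{i_1<\dots<i_s\}$ and $\operatorname{ind}(g)=\{j_1<\dots<j_s\}$, such that $i_s>i_{s-1}>j_s$ or $j_s>j_{s-1}>i_s$. Then $$\bigl|\mathrm{LTA}(m,2)\cdot f+\mathrm{LTA}(m,2)\cdot g\bigr|=\bigl|\mathrm{LTA}(m,2)\cdot f\bigr|\cdot\bigl|\mathrm{LTA}(m,2)\cdot g\bigr|.$$
   Context: $\mathcal{M}_m$: square-free monomials in $x_0,\dots,x_{m-1}$ in $\mathbf{R}_m=\mathbb{F}_2[x_0,\dots,x_{m-1}]/(x_i^2-x_i)$; $\operatorname{ind}(u)$ the variable indices, $\deg u=|\operatorname{ind}u|$. For equal-degree monomials with increasing indices, $u\preceq_{sh}v$ iff componentwise $\le$; $u\preceq v$ iff $u\preceq_{sh}v^*\mid v$ for some $v^*$; $\mathcal{I}$ decreasing if $f\in\mathcal{I}$, $g\preceq f\Rightarrow g\in\mathcal{I}$. $\mathrm{LTA}(m,2)$: pairs $(\mathbf{B},\varepsilon)$ with $\mathbf{B}=(b_{i,j})$ binary lower unitriangular $m\times m$ and $\varepsilon\in\mathbb{F}_2^m$, acting on monomial $u$ by $x_i\mapsto x_i+\sum_{j<i}b_{i,j}x_j+\varepsilon_i$ for $i\in\operatorname{ind}u$; $\mathrm{LTA}(m,2)\cdot f$ is the orbit (set of polynomials). $A+B=\{a+b:a\in A,b\in B\}$.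 *)

theory Defs
  imports Main
begin

text \<open>Elements of R_m = F_2[x_0..x_{m-1}]/(x_i^2 - x_i) are represented by their
  (unique) square-free normal form: a finite set of square-free monomials, each monomial
  being the set ind(u) of its variable indices. Addition is symmetric difference;
  the product of monomials u, v is u \<union> v (since x_i^2 = x_i).\<close>

type_synonym mono = "nat set"
type_synonym bpoly = "nat set set"

definition monomials :: "nat \<Rightarrow> mono set" where
  "monomials m = {u. u \<subseteq> {0..<m}}"

definition padd :: "bpoly \<Rightarrow> bpoly \<Rightarrow> bpoly" where
  "padd p q = (p - q) \<union> (q - p)"

definition pmul :: "bpoly \<Rightarrow> bpoly \<Rightarrow> bpoly" where
  "pmul p q = {w. odd (card {(u, v). u \<in> p \<and> v \<in> q \<and> u \<union> v = w})}"

definition pone :: bpoly where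
  "pone = {{}}"

definition pdeg :: "mono \<Rightarrow> nat" where
  "pdeg u = card u"

definition ind_list :: "mono \<Rightarrow> nat list" where
  "ind_list u = sorted_list_of_set u"

definition shift_le :: "mono \<Rightarrow> mono \<Rightarrow> bool" where
  "shift_le u v \<longleftrightarrow> card u = card v \<and>
     (\<forall>k < card u. ind_list u ! k \<le> ind_list v ! k)"

definition mono_le :: "mono \<Rightarrow> mono \<Rightarrow> bool" where
  "mono_le u v \<longleftrightarrow> (\<exists>vs. vs \<subseteq> v \<and> shift_le u vs)"

definition decreasing :: "nat \<Rightarrow> mono set \<Rightarrow> bool" where
  "decreasing m I \<longleftrightarrow> I \<subseteq> monomials m \<and>
     (\<forall>f \<in> I. \<forall>g \<in> monomials m. mono_le g f \<longrightarrow> g \<in> I)"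

text \<open>Affine image of variable x_i under (B, \<epsilon>): x_i + \<Sum>_{j<i} b_{i,j} x_j + \<epsilon>_i.
  The lower unitriangular binary matrix B is given by its strictly-lower entries b i j (j < i).\<close>
definition lin_img :: "(nat \<Rightarrow> nat \<Rightarrow> bool) \<Rightarrow> (nat \<Rightarrow> bool) \<Rightarrow> nat \<Rightarrow> bpoly" where
  "lin_img b e i = {{i}} \<union> {{j} | j. j < i \<and> b i j} \<union> (if e i then {{}} else {})"

definition lta_act :: "(nat \<Rightarrow> nat \<Rightarrow> bool) \<Rightarrow> (nat \<Rightarrow> bool) \<Rightarrow> mono \<Rightarrow> bpoly" where
  "lta_act b e u = foldr pmul (map (lin_img b e) (ind_list u)) pone"

text \<open>Orbit LTA(m,2) \<cdot> f: B ranges over lower unitriangular binary m\<times>m matrices,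
  \<epsilon> over F_2^m (only entries with indices < m are relevant, for f \<in> M_m).\<close>
definition lta_orbit :: "nat \<Rightarrow> mono \<Rightarrow> bpoly set" where
  "lta_orbit m f = {lta_act b e f | b e.
      (\<forall>i j. (i \<ge> m \<or> j \<ge> i) \<longrightarrow> \<not> b i j) \<and> (\<forall>i. i \<ge> m \<longrightarrow> \<not> e i)}"

definition sumset :: "bpoly set \<Rightarrow> bpoly set \<Rightarrow> bpoly set" where
  "sumset A B = {padd a c | a c. a \<in> A \<and> c \<in> B}"

end

theory Submission imports Defs begin

definition ev :: "bpoly \<Rightarrow> nat set \<Rightarrow> bool" where
  "ev p X = odd (card {u\<in>p. u \<subseteq> X})"

lemma ev_local: "(\<forall>u\<in>p. u \<subseteq> K) \<Longrightarrow> ev p X = ev p (X \<inter> K)"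
proof -
  assume "\<forall>u\<in>p. u \<subseteq> K"
  then have "{u\<in>p. u \<subseteq> X} = {u\<in>p. u \<subseteq> X \<inter> K}" by auto
  then show ?thesis unfolding ev_def by simp
qed

lemma ev_toggle:
  assumes "finite p" "{i} \<in> p" "\<forall>u\<in>p. i \<in> u \<longrightarrow> u = {i}"
  shows "ev p (insert i X) = (\<not> ev p (X - {i}))"
proof -
  have e: "{u\<in>p. u \<subseteq> insert i X} = insert {i} {u\<in>p. u \<subseteq> X - {i}}"
    using assms(2,3) by blast
  have "{i} \<notin> {u\<in>p. u \<subseteq> X - {i}}" by auto
  then have "card {u\<in>p. u \<subseteq> insert i X} = Suc (card {u\<in>p. u \<subseteq> X - {i}})"
    unfolding e using assms(1) by (simp add: card_insert_if)
  then show ?thesis unfolding ev_def by simp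
qed

lemma padd_finite: "finite p \<Longrightarrow> finite q \<Longrightarrow> finite (padd p q)"
  unfolding padd_def by auto

lemma ev_padd:
  assumes "finite p" "finite q"
  shows "ev (padd p q) X = (ev p X \<noteq> ev q X)"
proof -
  define A where "A = {u\<in>p. u \<subseteq> X}"
  define B where "B = {u\<in>q. u \<subseteq> X}"
  have fA: "finite A" "finite B" using assms A_def B_def by auto
  have e: "{u\<in>padd p q. u \<subseteq> X} = (A - B) \<union> (B - A)"
    unfolding padd_def A_def B_def by auto
  have "card A = card (A - B) + card (A \<inter> B)"
    using fA by (metis card_Un_disjoint Diff_Int_distrib2 Diff_disjoint Int_Diff_disjoint Un_Diff_Int finite_Diff finite_Int inf.commute)
  moreover have "card B = card (B - A) + card (A \<inter> B)"
    using fA by (metis card_Un_disjoint Diff_disjoint Int_Diff_disjoint Un_Diff_Int finite_Diff finite_Int inf.commute)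
  moreover have "card {u\<in>padd p q. u \<subseteq> X} = card (A - B) + card (B - A)"
    unfolding e by (rule card_Un_disjoint) (use fA in auto)
  ultimately show ?thesis unfolding ev_def A_def[symmetric] B_def[symmetric] by auto
qed

lemma parity_sum: "finite S \<Longrightarrow> even (\<Sum>w\<in>S. c w :: nat) = even (card {w\<in>S. odd (c w)})"
proof (induction S rule: finite_induct)
  case empty then show ?case by simp
next
  case (insert x F)
  have "{w\<in>insert x F. odd (c w)} = (if odd (c x) then insert x {w\<in>F. odd (c w)} else {w\<in>F. odd (c w)})"
    by auto
  then show ?case using insert by (auto simp: card_insert_if)
qed

lemma pmul_sub: "pmul p q \<subseteq> (\<lambda>(u,v). u \<union> v) ` (p \<times> q)"
proof
  fix w assume "w \<in> pmul p q"
  then have "card {(u, v). u \<in> p \<and> v \<in> q \<and> u \<union> v = w} \<noteq> 0" unfolding pmul_def by (auto dest: odd_pos)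
  then have "{(u, v). u \<in> p \<and> v \<in> q \<and> u \<union> v = w} \<noteq> {}"
  proof (rule contrapos_nn)
    assume "{(u, v). u \<in> p \<and> v \<in> q \<and> u \<union> v = w} = {}"
    then show "card {(u, v). u \<in> p \<and> v \<in> q \<and> u \<union> v = w} = 0" by (simp only: card.empty)
  qed
  then obtain z where "z \<in> {(u, v). u \<in> p \<and> v \<in> q \<and> u \<union> v = w}" by blast
  then obtain u v where "u \<in> p" "v \<in> q" "u \<union> v = w" by auto
  then show "w \<in> (\<lambda>(u,v). u \<union> v) ` (p \<times> q)" by (auto intro!: image_eqI[of _ _ "(u,v)"])
qed

lemma pmul_finite: "finite p \<Longrightarrow> finite q \<Longrightarrow> finite (pmul p q)"
  by (rule finite_subset[OF pmul_sub]) auto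

lemma pmul_bound: "(\<forall>u\<in>p. u \<subseteq> K) \<Longrightarrow> (\<forall>v\<in>q. v \<subseteq> K) \<Longrightarrow> \<forall>w\<in>pmul p q. w \<subseteq> K"
  using pmul_sub by fastforce

lemma ev_pmul:
  assumes fp: "finite p" and fq: "finite q"
  shows "ev (pmul p q) X = (ev p X \<and> ev q X)"
proof -
  define h where "h = (\<lambda>(u::nat set,v::nat set). u \<union> v)"
  define A where "A = {u\<in>p. u \<subseteq> X} \<times> {v\<in>q. v \<subseteq> X}"
  define S where "S = h ` A"
  have fA: "finite A" using fp fq A_def by auto
  have fS: "finite S" using fA S_def by auto
  have cnt: "card {(u, v). u \<in> p \<and> v \<in> q \<and> u \<union> v = w} = card {z \<in> A. h z = w}" if "w \<subseteq> X" for w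
  proof -
    have "{(u, v). u \<in> p \<and> v \<in> q \<and> u \<union> v = w} = {z \<in> A. h z = w}"
      using that unfolding A_def h_def by auto
    then show ?thesis by simp
  qed
  have T: "{w\<in>pmul p q. w \<subseteq> X} = {w\<in>S. odd (card {z \<in> A. h z = w})}"
  proof (intro set_eqI iffI)
    fix w assume w: "w \<in> {w\<in>pmul p q. w \<subseteq> X}"
    then have "odd (card {z \<in> A. h z = w})" using cnt unfolding pmul_def by auto
    then have "{z \<in> A. h z = w} \<noteq> {}" by (metis card.empty even_zero)
    then have "w \<in> S" unfolding S_def by auto
    then show "w \<in> {w\<in>S. odd (card {z \<in> A. h z = w})}" using \<open>odd (card {z \<in> A. h z = w})\<close> by auto
  next
    fix w assume w: "w \<in> {w\<in>S. odd (card {z \<in> A. h z = w})}"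
    then have "w \<subseteq> X" unfolding S_def A_def h_def by auto
    then show "w \<in> {w\<in>pmul p q. w \<subseteq> X}" using w cnt unfolding pmul_def by auto
  qed
  have "card A = (\<Sum>w\<in>S. card {z \<in> A. h z = w})"
    using sum.group[OF fA fS, of h "\<lambda>_. 1::nat"] by (simp add: S_def flip: card_eq_sum)
  then have "even (card A) = even (card {w\<in>pmul p q. w \<subseteq> X})"
    using T parity_sum[OF fS] by simp
  moreover have "card A = card {u\<in>p. u \<subseteq> X} * card {v\<in>q. v \<subseteq> X}"
    unfolding A_def by (simp add: card_cartesian_product)
  ultimately show ?thesis unfolding ev_def by auto
qed

lemma ev_inj:
  assumes "finite p" "finite q" "\<forall>X. ev p X = ev q X"
  shows "p = q"
proof (rule ccontr)
  assume "p \<noteq> q"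
  define r where "r = padd p q"
  have fr: "finite r" using assms r_def padd_finite by auto
  have "r \<noteq> {}" using \<open>p \<noteq> q\<close> unfolding r_def padd_def by auto
  then obtain u where u: "u \<in> r" "\<forall>b\<in>r. b \<le> u \<longrightarrow> u = b" using finite_has_minimal[OF fr] by blast
  have "{v\<in>r. v \<subseteq> u} = {u}" using u by auto
  then have "ev r u" unfolding ev_def by simp
  moreover have "\<not> ev r u" using ev_padd[OF assms(1,2)] assms(3) r_def by simp
  ultimately show False by simp
qed

lemma lin_finite: "finite (lin_img b e i)"
proof -
  have "{{j} | j. j < i \<and> b i j} \<subseteq> (\<lambda>j. {j}) ` {..<i}" by auto
  then have "finite {{j} | j. j < i \<and> b i j}" by (rule finite_subset) auto
  then show ?thesis unfolding lin_img_def by auto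
qed

lemma lin_bound: "\<forall>u\<in>lin_img b e i. u \<subseteq> {..i}"
  unfolding lin_img_def by auto

lemma lin_mem: "{i} \<in> lin_img b e i"
  unfolding lin_img_def by auto

lemma lin_only: "\<forall>u\<in>lin_img b e i. i \<in> u \<longrightarrow> u = {i}"
  unfolding lin_img_def by auto

lemma lin_local: "ev (lin_img b e i) X = ev (lin_img b e i) (X \<inter> {..i})"
  using ev_local[OF lin_bound] by blast

lemma lin_toggle: "ev (lin_img b e i) (insert i X) = (\<not> ev (lin_img b e i) (X - {i}))"
  using ev_toggle[OF lin_finite lin_mem lin_only] by blast

lemma foldr_props:
  "finite (foldr pmul (map (lin_img b e) xs) pone) \<and>
   (\<forall>X. ev (foldr pmul (map (lin_img b e) xs) pone) X = (\<forall>i\<in>set xs. ev (lin_img b e i) X)) \<and>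
   ((\<forall>i\<in>set xs. i < q) \<longrightarrow> (\<forall>w\<in>foldr pmul (map (lin_img b e) xs) pone. w \<subseteq> {..<q}))"
proof (induction xs)
  case Nil
  have e: "ev pone X" for X
  proof -
    have "{u \<in> pone. u \<subseteq> X} = {{}}" unfolding pone_def by auto
    then show "ev pone X" unfolding ev_def by simp
  qed
  have "finite pone" unfolding pone_def by simp
  then show ?case using e by (simp add: pone_def)
next
  case (Cons a xs)
  have b: "\<forall>u\<in>lin_img b e a. u \<subseteq> {..<q}" if "a < q"
    using lin_bound[of b e a] that by fastforce
  let ?r = "foldr pmul (map (lin_img b e) xs) pone"
  have fr: "finite ?r" using Cons by blast
  have 1: "finite (foldr pmul (map (lin_img b e) (a # xs)) pone)"
    using fr lin_finite[of b e a] by (simp add: pmul_finite)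
  have 2: "\<forall>X. ev (foldr pmul (map (lin_img b e) (a # xs)) pone) X = (\<forall>i\<in>set (a # xs). ev (lin_img b e i) X)"
    using Cons fr lin_finite[of b e a] by (simp add: ev_pmul)
  have 3: "(\<forall>i\<in>set (a # xs). i < q) \<longrightarrow> (\<forall>w\<in>foldr pmul (map (lin_img b e) (a # xs)) pone. w \<subseteq> {..<q})"
  proof
    assume h: "\<forall>i\<in>set (a # xs). i < q"
    then have "\<forall>w\<in>?r. w \<subseteq> {..<q}" using Cons by simp
    moreover have "\<forall>u\<in>lin_img b e a. u \<subseteq> {..<q}" using b h by simp
    ultimately show "\<forall>w\<in>foldr pmul (map (lin_img b e) (a # xs)) pone. w \<subseteq> {..<q}"
      using pmul_bound[of "lin_img b e a" "{..<q}" ?r] by simp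
  qed
  show ?case using 1 2 3 by blast
qed

lemma lta_finite: "finite (lta_act b e u)"
  unfolding lta_act_def using foldr_props by blast

lemma lta_ev: "finite u \<Longrightarrow> ev (lta_act b e u) X = (\<forall>i\<in>u. ev (lin_img b e i) X)"
  unfolding lta_act_def ind_list_def using foldr_props[of b e "sorted_list_of_set u"] by simp

lemma lta_bound: "finite u \<Longrightarrow> \<forall>i\<in>u. i < q \<Longrightarrow> \<forall>w\<in>lta_act b e u. w \<subseteq> {..<q}"
  unfolding lta_act_def ind_list_def using foldr_props[of b e "sorted_list_of_set u" q] by simp

lemma padd_cancel: "padd a c = padd a c' \<Longrightarrow> c = c'"
  unfolding padd_def by blast

lemma core:
  assumes ff: "finite f" and fg: "finite g" and pf: "p \<in> f" and qf: "q \<in> f" and qp: "q < p"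
    and fl: "\<forall>i\<in>f-{p}. i < p" and gl: "\<forall>j\<in>g. j < q"
  shows "inj_on (\<lambda>(a,c). padd a c) (lta_orbit m f \<times> lta_orbit m g)"
proof (rule inj_onI, clarify)
  fix a c a' c'
  assume a: "a \<in> lta_orbit m f" and c: "c \<in> lta_orbit m g" and a': "a' \<in> lta_orbit m f"
    and c': "c' \<in> lta_orbit m g" and eq: "padd a c = padd a' c'"
  obtain b e where ab: "a = lta_act b e f" using a unfolding lta_orbit_def by blast
  obtain b' e' where ab': "a' = lta_act b' e' f" using a' unfolding lta_orbit_def by blast
  obtain bc ec where cb: "c = lta_act bc ec g" using c unfolding lta_orbit_def by blast
  obtain bc' ec' where cb': "c' = lta_act bc' ec' g" using c' unfolding lta_orbit_def by blast
  define l where "l i X = ev (lin_img b e i) X" for i X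
  define l' where "l' i X = ev (lin_img b' e' i) X" for i X
  define D where "D X = (ev a X \<noteq> ev a' X)" for X
  have fa: "finite a" "finite a'" "finite c" "finite c'" using ab ab' cb cb' lta_finite by auto
  have evp: "(ev a X \<noteq> ev c X) = (ev a' X \<noteq> ev c' X)" for X
    using ev_padd[OF fa(1,3)] ev_padd[OF fa(2,4)] eq by metis
  have cbd: "\<forall>w\<in>c. w \<subseteq> {..<q}" "\<forall>w\<in>c'. w \<subseteq> {..<q}"
    using lta_bound[OF fg gl] cb cb' by auto
  have Dloc: "D X = D Y" if "X \<inter> {..<q} = Y \<inter> {..<q}" for X Y
  proof -
    have "D X = (ev c X \<noteq> ev c' X)" "D Y = (ev c Y \<noteq> ev c' Y)" unfolding D_def using evp by metis+
    moreover have "ev c X = ev c Y" "ev c' X = ev c' Y"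
      using ev_local[OF cbd(1), of X] ev_local[OF cbd(1), of Y] ev_local[OF cbd(2), of X] ev_local[OF cbd(2), of Y] that
      by auto
    ultimately show ?thesis by simp
  qed
  define Pq where "Pq X = (\<forall>i\<in>f-{p}. l i X)" for X
  define Pq' where "Pq' X = (\<forall>i\<in>f-{p}. l' i X)" for X
  have eva: "ev a X = (Pq X \<and> l p X)" for X
    unfolding ab lta_ev[OF ff] Pq_def l_def using pf by blast
  have eva': "ev a' X = (Pq' X \<and> l' p X)" for X
    unfolding ab' lta_ev[OF ff] Pq'_def l'_def using pf by blast
  have Pins: "Pq (insert p X) = Pq (X - {p})" "Pq' (insert p X) = Pq' (X - {p})"
     "Pq X = Pq (X - {p})" "Pq' X = Pq' (X - {p})" for X
  proof -
    have "\<And>i. i \<in> f - {p} \<Longrightarrow> insert p X \<inter> {..i} = (X - {p}) \<inter> {..i} \<and> X \<inter> {..i} = (X - {p}) \<inter> {..i}"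
    proof -
      fix i assume "i \<in> f - {p}"
      then have "i < p" using fl by blast
      then show "insert p X \<inter> {..i} = (X - {p}) \<inter> {..i} \<and> X \<inter> {..i} = (X - {p}) \<inter> {..i}" by auto
    qed
    then show "Pq (insert p X) = Pq (X - {p})" "Pq' (insert p X) = Pq' (X - {p})"
     "Pq X = Pq (X - {p})" "Pq' X = Pq' (X - {p})"
      unfolding Pq_def Pq'_def l_def l'_def
      by (metis lin_local)+
  qed
  have PP: "Pq Y = Pq' Y" for Y
  proof -
    define Y0 where "Y0 = Y - {p}"
    have "D Y0 = D (insert p Y)" by (rule Dloc) (use qp Y0_def in auto)
    moreover have "l p (insert p Y) = (\<not> l p Y0)" "l' p (insert p Y) = (\<not> l' p Y0)"
      unfolding l_def l'_def Y0_def by (rule lin_toggle)+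
    moreover have "Pq (insert p Y) = Pq Y0" "Pq' (insert p Y) = Pq' Y0" using Pins Y0_def by auto
    ultimately have "Pq Y0 = Pq' Y0" unfolding D_def eva eva' by auto
    then show ?thesis using Pins(3,4) Y0_def by metis
  qed
  have Dl: "l q Z" if "D Z" for Z
  proof -
    have "Pq Z" using that PP unfolding D_def eva eva' by auto
    then show ?thesis using qf qp unfolding Pq_def by auto
  qed
  have aa: "ev a X = ev a' X" for X
  proof (rule ccontr)
    assume "ev a X \<noteq> ev a' X"
    then have DX: "D X" unfolding D_def by simp
    show False
    proof (cases "q \<in> X")
      case True
      have "D (X - {q})" using DX Dloc[of X "X - {q}"] by auto
      then have "l q (X - {q})" by (rule Dl)
      moreover have "l q (insert q (X - {q})) = (\<not> l q ((X - {q}) - {q}))" unfolding l_def by (rule lin_toggle)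
      moreover have "insert q (X - {q}) = X" using True by auto
      ultimately show False using Dl[OF DX] by auto
    next
      case False
      have "D (insert q X)" using DX Dloc[of X "insert q X"] by auto
      then have "l q (insert q X)" by (rule Dl)
      moreover have "l q (insert q X) = (\<not> l q (X - {q}))" unfolding l_def by (rule lin_toggle)
      moreover have "X - {q} = X" using False by auto
      ultimately show False using Dl[OF DX] by auto
    qed
  qed
  have "a = a'" by (rule ev_inj) (use fa aa in auto)
  then show "a = a' \<and> c = c'" using eq padd_cancel by blast
qed

lemma sl_max:
  assumes "finite A" "card A = s" "s \<ge> 1" "x \<in> A"
  shows "x \<le> ind_list A ! (s-1)"
proof -
  let ?L = "ind_list A"
  have len: "length ?L = s" and st: "set ?L = A" and so: "sorted ?L"
    using assms unfolding ind_list_def by auto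
  obtain k where k: "k < s" "?L ! k = x" using assms(4) st len by (metis in_set_conv_nth)
  show ?thesis using sorted_nth_mono[OF so, of k "s-1"] k len assms(3) by auto
qed

lemma sl_mem:
  assumes "finite A" "card A = s" "k < s"
  shows "ind_list A ! k \<in> A"
  using assms unfolding ind_list_def by (metis length_sorted_list_of_set nth_mem set_sorted_list_of_set)

lemma sumset_img: "sumset A B = (\<lambda>(a,c). padd a c) ` (A \<times> B)"
  unfolding sumset_def by auto

lemma sumset_comm: "sumset A B = sumset B A"
  unfolding sumset_def padd_def by blast

lemma case1:
  assumes ff: "finite f" "card f = s" and fg: "finite g" "card g = s" and s: "s \<ge> 2"
    and h: "ind_list f ! (s-1) > ind_list f ! (s-2)" "ind_list f ! (s-2) > ind_list g ! (s-1)"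
  shows "card (sumset (lta_orbit m f) (lta_orbit m g)) = card (lta_orbit m f) * card (lta_orbit m g)"
proof -
  define p where "p = ind_list f ! (s-1)"
  define q where "q = ind_list f ! (s-2)"
  have pf: "p \<in> f" "q \<in> f" unfolding p_def q_def using sl_mem[OF ff] s by auto
  have fl: "\<forall>i\<in>f-{p}. i < p" using sl_max[OF ff] s p_def by fastforce
  have gl: "\<forall>j\<in>g. j < q" using sl_max[OF fg] s h q_def by fastforce
  have "inj_on (\<lambda>(a,c). padd a c) (lta_orbit m f \<times> lta_orbit m g)"
    by (rule core[OF ff(1) fg(1) pf _ fl gl]) (use h p_def q_def in auto)
  then show ?thesis unfolding sumset_img by (simp add: card_image card_cartesian_product)
qed

theorem mainTheorem11:
  fixes m s :: nat and I :: "nat set set" and f g :: "nat set"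
  assumes "decreasing m I"
    and "f \<in> I" and "g \<in> I"
    and "pdeg f = s" and "pdeg g = s" and "s \<ge> 2"
    and "(ind_list f ! (s-1) > ind_list f ! (s-2) \<and> ind_list f ! (s-2) > ind_list g ! (s-1))
       \<or> (ind_list g ! (s-1) > ind_list g ! (s-2) \<and> ind_list g ! (s-2) > ind_list f ! (s-1))"
  shows "card (sumset (lta_orbit m f) (lta_orbit m g)) = card (lta_orbit m f) * card (lta_orbit m g)"
proof -
  have cf: "card f = s" "card g = s" using assms(4,5) unfolding pdeg_def by auto
  have fin: "finite f" "finite g" using cf assms(6) by (metis card.infinite not_numeral_le_zero)+
  show ?thesis
  proof (cases "ind_list f ! (s-1) > ind_list f ! (s-2) \<and> ind_list f ! (s-2) > ind_list g ! (s-1)")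
    case True
    then show ?thesis using case1[OF fin(1) cf(1) fin(2) cf(2) assms(6)] by blast
  next
    case False
    then have "ind_list g ! (s-1) > ind_list g ! (s-2) \<and> ind_list g ! (s-2) > ind_list f ! (s-1)"
      using assms(7) by blast
    then have "card (sumset (lta_orbit m g) (lta_orbit m f)) = card (lta_orbit m g) * card (lta_orbit m f)"
      using case1[OF fin(2) cf(2) fin(1) cf(1) assms(6)] by blast
    then show ?thesis using sumset_comm by (metis mult.commute)
  qed
qed

end
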